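(* Let $n\ge2$ and let $\mathcal S$ be a branch of $\mathcal Q=\{x:x^TMx-2\beta^Tx+\gamma\le0\}$ in the hyperbolic case (one branch of a two-sheet hyperboloid or of a translated cone). Assume $\delta_{\inf}:=\inf\{x_n:x\in\mathcal S\}>-\infty$, but the infimum is either not attained or attained at more than one point of $\mathcal S$. Then $$\inf\{x_n:x\in\mathcal S\cap\mathbb Z^n\}-\delta_{\inf}\le1 .$$
   Context: Hyperbolic case: $M\in\mathbb S^n$ invertible with exactly one negative eigenvalue, $\beta\in\mathbb R^n$, $\gamma\in\mathbb R$, $q^*:=\beta^TM^{-1}\beta-\gamma\le0$; with $c_0=M^{-1}\beta$, $u$ a unit eigenvector of the negative eigenvalue and $C=\{y:y^TMy\le0,\ u^Ty\ge0\}$, the branches of $\mathcal Q$ are $c_0+(\{y:y^TMy\le q^*\}\cap C)$ and $c_0+(\{y:y^TMy\le q^*\}\cap(-C))$. *)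

theory Defs
  imports "Jordan_Normal_Form.Char_Poly" "Jordan_Normal_Form.Gauss_Jordan_Elimination"
    "HOL-Library.Extended_Real"
begin

definition num_neg_eigenvalues :: "real mat \<Rightarrow> nat" where
  "num_neg_eigenvalues M =
     (\<Sum>l \<in> {l. l < 0 \<and> eigenvalue M l}. order l (char_poly M))"

definition quadric_set :: "nat \<Rightarrow> real mat \<Rightarrow> real vec \<Rightarrow> real \<Rightarrow> real vec set" where
  "quadric_set n M \<beta> \<gamma> =
     {x \<in> carrier_vec n. x \<bullet> (M *\<^sub>v x) - 2 * (\<beta> \<bullet> x) + \<gamma> \<le> 0}"

definition centre :: "real mat \<Rightarrow> real vec \<Rightarrow> real vec" where
  "centre M \<beta> = the (mat_inverse M) *\<^sub>v \<beta>"

definition qstar :: "real mat \<Rightarrow> real vec \<Rightarrow> real \<Rightarrow> real" where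
  "qstar M \<beta> \<gamma> = \<beta> \<bullet> centre M \<beta> - \<gamma>"

text \<open>The branch c0 + ({y. y^T M y \<le> q*} \<inter> (s C)) for a sign s \<in> {1,-1},
  where C = {y. y^T M y \<le> 0, u^T y \<ge> 0}; s = 1 gives C, s = -1 gives -C.\<close>
definition branch :: "nat \<Rightarrow> real mat \<Rightarrow> real vec \<Rightarrow> real \<Rightarrow> real vec \<Rightarrow> real \<Rightarrow> real vec set" where
  "branch n M \<beta> \<gamma> u s =
     {centre M \<beta> + y | y. y \<in> carrier_vec n \<and> y \<bullet> (M *\<^sub>v y) \<le> qstar M \<beta> \<gamma>
        \<and> y \<bullet> (M *\<^sub>v y) \<le> 0 \<and> s * (u \<bullet> y) \<ge> 0}"

definition int_vecs :: "nat \<Rightarrow> real vec set" where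
  "int_vecs n = {x \<in> carrier_vec n. \<forall>i<n. x $ i \<in> \<int>}"

end

theory Submission
  imports Defs
begin

lemma bil_sym:
  fixes A :: "real mat"
  assumes A: "A \<in> carrier_mat n n" and s: "transpose_mat A = A"
    and x: "x \<in> carrier_vec n" and y: "y \<in> carrier_vec n"
  shows "x \<bullet> (A *\<^sub>v y) = y \<bullet> (A *\<^sub>v x)"
proof -
  have "y \<bullet> (A *\<^sub>v x) = (transpose_mat A *\<^sub>v y) \<bullet> x"
    using transpose_vec_mult_scalar[OF A x y] by simp
  also have "\<dots> = x \<bullet> (A *\<^sub>v y)" using s comm_scalar_prod[of "A *\<^sub>v y" n x] A x y by simp
  finally show ?thesis by simp
qed

lemma expand2:
  fixes A :: "real mat"
  assumes A: "A \<in> carrier_mat n n" and s: "transpose_mat A = A"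
    and x: "x \<in> carrier_vec n" and y: "y \<in> carrier_vec n"
  shows "(a \<cdot>\<^sub>v x + b \<cdot>\<^sub>v y) \<bullet> (A *\<^sub>v (a \<cdot>\<^sub>v x + b \<cdot>\<^sub>v y))
     = a^2 * (x \<bullet> (A *\<^sub>v x)) + 2*a*b * (x \<bullet> (A *\<^sub>v y)) + b^2 * (y \<bullet> (A *\<^sub>v y))"
proof -
  have Ax: "A *\<^sub>v x \<in> carrier_vec n" and Ay: "A *\<^sub>v y \<in> carrier_vec n" using A x y by auto
  have "A *\<^sub>v (a \<cdot>\<^sub>v x + b \<cdot>\<^sub>v y) = a \<cdot>\<^sub>v (A *\<^sub>v x) + b \<cdot>\<^sub>v (A *\<^sub>v y)"
    using A x y by (simp add: mult_add_distrib_mat_vec mult_mat_vec)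
  then have "(a \<cdot>\<^sub>v x + b \<cdot>\<^sub>v y) \<bullet> (A *\<^sub>v (a \<cdot>\<^sub>v x + b \<cdot>\<^sub>v y))
    = a*a*(x \<bullet> (A *\<^sub>v x)) + a*b*(x \<bullet> (A *\<^sub>v y)) + b*a*(y \<bullet> (A *\<^sub>v x)) + b*b*(y \<bullet> (A *\<^sub>v y))"
    using x y Ax Ay by (simp add: add_scalar_prod_distrib[of _ n] scalar_prod_add_distrib[of _ n] algebra_simps)
  then show ?thesis using bil_sym[OF A s x y] by (simp add: power2_eq_square algebra_simps)
qed

lemma quad_nonneg_disc:
  fixes a b c :: real
  assumes h: "\<And>t. 0 \<le> a + 2*t*b + t^2*c"
  shows "b^2 \<le> a*c"
proof -
  have a0: "0 \<le> a" using h[of 0] by simp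
  have c0: "0 \<le> c"
  proof (rule ccontr)
    assume "\<not> 0 \<le> c"
    then have cn: "c < 0" by simp
    define s where "s = sqrt ((a+1)/(-c))"
    have nn: "0 \<le> (a+1)/(-c)" using a0 cn by (intro divide_nonneg_pos) auto
    have s2: "s^2 = (a+1)/(-c)" unfolding s_def by (rule real_sqrt_pow2[OF nn])
    have "s^2 * c = -(a+1)" using s2 cn by (simp add: field_simps)
    then have "0 \<le> 2*a + 2*(s^2*c)" using h[of s] h[of "-s"] by (simp add: algebra_simps)
    then show False using \<open>s^2 * c = -(a+1)\<close> by simp
  qed
  show ?thesis
  proof (cases "c = 0")
    case True
    show ?thesis
    proof (cases "b = 0")
      case True then show ?thesis using \<open>c = 0\<close> by simp
    next
      case False
      have "0 \<le> a + 2*(-(a+1)/(2*b))*b" using h[of "-(a+1)/(2*b)"] \<open>c = 0\<close> by simp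
      also have "\<dots> = -1" using False by (simp add: field_simps)
      finally show ?thesis by simp
    qed
  next
    case False
    then have cp: "c > 0" using c0 by simp
    have "0 \<le> a + 2*(-b/c)*b + (-b/c)^2*c" by (rule h)
    also have "\<dots> = a - b^2/c" using cp by (simp add: field_simps power2_eq_square)
    finally have "b^2/c \<le> a" by simp
    then show ?thesis using cp by (simp add: field_simps mult.commute)
  qed
qed

lemma cs_form:
  fixes A :: "real mat"
  assumes A: "A \<in> carrier_mat n n" and s: "transpose_mat A = A"
    and x: "x \<in> carrier_vec n" and y: "y \<in> carrier_vec n"
    and psd: "\<And>t. 0 \<le> (x + t \<cdot>\<^sub>v y) \<bullet> (A *\<^sub>v (x + t \<cdot>\<^sub>v y))"
  shows "(x \<bullet> (A *\<^sub>v y))^2 \<le> (x \<bullet> (A *\<^sub>v x)) * (y \<bullet> (A *\<^sub>v y))"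
proof (rule quad_nonneg_disc)
  fix t
  have "(x + t \<cdot>\<^sub>v y) = 1 \<cdot>\<^sub>v x + t \<cdot>\<^sub>v y" by simp
  then show "0 \<le> x \<bullet> (A *\<^sub>v x) + 2 * t * (x \<bullet> (A *\<^sub>v y)) + t\<^sup>2 * (y \<bullet> (A *\<^sub>v y))"
    using psd[of t] expand2[OF A s x y, of 1 t] by simp
qed

definition SA :: "nat \<Rightarrow> real mat \<Rightarrow> real" where
  "SA n A = (\<Sum>i<n. \<Sum>j<n. \<bar>A $$ (i,j)\<bar>)"

lemma quad_sum:
  fixes A :: "real mat"
  assumes A: "A \<in> carrier_mat n n" and x: "x \<in> carrier_vec n"
  shows "x \<bullet> (A *\<^sub>v x) = (\<Sum>i<n. \<Sum>j<n. A $$ (i,j) * (x $ i * x $ j))"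
proof -
  have "x \<bullet> (A *\<^sub>v x) = (\<Sum>i<n. x $ i * (\<Sum>j<n. A $$ (i,j) * x $ j))"
    using A x by (simp add: scalar_prod_def mult_mat_vec_def row_def atLeast0LessThan)
  also have "\<dots> = (\<Sum>i<n. \<Sum>j<n. A $$ (i,j) * (x $ i * x $ j))"
    by (simp add: sum_distrib_left algebra_simps)
  finally show ?thesis .
qed

lemma sq_sum: "(x :: real vec) \<in> carrier_vec n \<Longrightarrow> x \<bullet> x = (\<Sum>i<n. (x $ i)^2)"
  by (simp add: scalar_prod_def atLeast0LessThan power2_eq_square)

lemma comp_le_norm: assumes x: "(x :: real vec) \<in> carrier_vec n" and i: "i < n"
  shows "(x $ i)^2 \<le> x \<bullet> x"
proof -
  have "(x $ i)^2 \<le> (\<Sum>i<n. (x $ i)^2)"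
    by (rule member_le_sum[where f="\<lambda>i. (x $ i)^2"], insert i, auto)
  then show ?thesis using sq_sum[OF x] by simp
qed

lemma quad_bound:
  fixes A :: "real mat"
  assumes A: "A \<in> carrier_mat n n" and x: "x \<in> carrier_vec n"
  shows "\<bar>x \<bullet> (A *\<^sub>v x)\<bar> \<le> SA n A * (x \<bullet> x)"
proof -
  have "\<bar>x \<bullet> (A *\<^sub>v x)\<bar> \<le> (\<Sum>i<n. \<Sum>j<n. \<bar>A $$ (i,j) * (x $ i * x $ j)\<bar>)"
    unfolding quad_sum[OF A x] by (rule order.trans[OF sum_abs], rule sum_mono, rule sum_abs)
  also have "\<dots> \<le> (\<Sum>i<n. \<Sum>j<n. \<bar>A $$ (i,j)\<bar> * (x \<bullet> x))"
  proof (rule sum_mono, rule sum_mono)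
    fix i j assume i: "i \<in> {..<n}" and j: "j \<in> {..<n}"
    have "\<bar>x $ i * x $ j\<bar> \<le> ((x $ i)^2 + (x $ j)^2)/2"
    proof -
      have "0 \<le> (\<bar>x $ i\<bar> - \<bar>x $ j\<bar>)^2" by simp
      then show ?thesis by (simp add: abs_mult power2_eq_square algebra_simps)
    qed
    also have "\<dots> \<le> x \<bullet> x" using comp_le_norm[OF x, of i] comp_le_norm[OF x, of j] i j by simp
    finally show "\<bar>A $$ (i,j) * (x $ i * x $ j)\<bar> \<le> \<bar>A $$ (i,j)\<bar> * (x \<bullet> x)"
      by (simp add: abs_mult mult_left_mono)
  qed
  also have "\<dots> = SA n A * (x \<bullet> x)" by (simp add: SA_def sum_distrib_right)
  finally show ?thesis .
qed

lemma vec_pos: assumes x: "(x :: real vec) \<in> carrier_vec n" and nz: "x \<noteq> 0\<^sub>v n"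
  shows "0 < x \<bullet> x"
proof -
  obtain i where i: "i < n" and xi: "x $ i \<noteq> 0"
    using nz x by (metis eq_vecI carrier_vecD index_zero_vec(1) index_zero_vec(2))
  have "0 < (x $ i)^2" using xi by simp
  also have "\<dots> \<le> x \<bullet> x" by (rule comp_le_norm[OF x i])
  finally show ?thesis .
qed

lemma self_nonneg: "(x :: real vec) \<in> carrier_vec n \<Longrightarrow> 0 \<le> x \<bullet> x"
  by (simp add: sq_sum sum_nonneg)

lemma SA_nonneg: "0 \<le> SA n A"
  unfolding SA_def by (intro sum_nonneg) auto

lemma smult_one_mult: assumes x: "(x :: real vec) \<in> carrier_vec n"
  shows "(t \<cdot>\<^sub>m 1\<^sub>m n) *\<^sub>v x = t \<cdot>\<^sub>v x"
proof (rule eq_vecI)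
  fix i assume "i < dim_vec (t \<cdot>\<^sub>v x)"
  then have i: "i < n" using x by simp
  have "row (t \<cdot>\<^sub>m 1\<^sub>m n) i = t \<cdot>\<^sub>v unit_vec n i" using i by (intro eq_vecI) auto
  then show "((t \<cdot>\<^sub>m 1\<^sub>m n) *\<^sub>v x) $ i = (t \<cdot>\<^sub>v x) $ i"
    using i x by (simp add: scalar_prod_left_unit)
qed (use x in simp)

lemma min_eig:
  fixes A :: "real mat"
  assumes A: "A \<in> carrier_mat n n" and s: "transpose_mat A = A" and n: "0 < n"
  shows "\<exists>z \<mu>. z \<in> carrier_vec n \<and> z \<noteq> 0\<^sub>v n \<and> A *\<^sub>v z = \<mu> \<cdot>\<^sub>v z \<and>
     (\<forall>x\<in>carrier_vec n. \<mu> * (x \<bullet> x) \<le> x \<bullet> (A *\<^sub>v x))"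
proof -
  define T where "T = {t::real. \<forall>x\<in>carrier_vec n. 0 \<le> x \<bullet> (A *\<^sub>v x) + t * (x \<bullet> x)}"
  have SAT: "SA n A \<in> T"
    unfolding T_def
  proof (intro CollectI ballI)
    fix x :: "real vec" assume x: "x \<in> carrier_vec n"
    from quad_bound[OF A x] show "0 \<le> x \<bullet> (A *\<^sub>v x) + SA n A * (x \<bullet> x)"
      by (simp add: abs_le_iff algebra_simps)
  qed
  have lb: "- (A $$ (0,0)) \<le> t" if t: "t \<in> T" for t
  proof -
    have e: "unit_vec n 0 \<in> carrier_vec n" by simp
    have "0 \<le> unit_vec n 0 \<bullet> (A *\<^sub>v unit_vec n 0) + t * (unit_vec n 0 \<bullet> unit_vec n 0)"
      using t e unfolding T_def by blast
    moreover have "unit_vec n 0 \<bullet> (A *\<^sub>v unit_vec n 0) = A $$ (0,0)"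
      using A n by (simp add: scalar_prod_left_unit)
    moreover have "unit_vec n 0 \<bullet> unit_vec n 0 = (1::real)" using n by simp
    ultimately show ?thesis by simp
  qed
  define ts where "ts = Inf T"
  have bdd: "bdd_below T" using lb by (auto simp: bdd_below_def)
  have ne: "T \<noteq> {}" using SAT by auto
  have tsT: "ts \<in> T"
    unfolding T_def
  proof (intro CollectI ballI, rule ccontr)
    fix x assume x: "x \<in> carrier_vec n" and neg: "\<not> 0 \<le> x \<bullet> (A *\<^sub>v x) + ts * (x \<bullet> x)"
    have xx: "0 \<le> x \<bullet> x" by (rule self_nonneg[OF x])
    have "x \<bullet> x \<noteq> 0"
    proof
      assume "x \<bullet> x = 0"
      then have "0 \<le> x \<bullet> (A *\<^sub>v x)" using SAT x unfolding T_def by force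
      then show False using neg \<open>x \<bullet> x = 0\<close> by simp
    qed
    then have xp: "0 < x \<bullet> x" using xx by simp
    have "- (x \<bullet> (A *\<^sub>v x)) / (x \<bullet> x) \<le> t" if "t \<in> T" for t
    proof -
      have "0 \<le> x \<bullet> (A *\<^sub>v x) + t * (x \<bullet> x)" using that x unfolding T_def by blast
      then show ?thesis using xp by (simp add: field_simps)
    qed
    then have "- (x \<bullet> (A *\<^sub>v x)) / (x \<bullet> x) \<le> ts" unfolding ts_def
      by (intro cInf_greatest ne) auto
    then have "0 \<le> x \<bullet> (A *\<^sub>v x) + ts * (x \<bullet> x)" using xp by (simp add: field_simps)
    then show False using neg by simp
  qed
  define B where "B = A + ts \<cdot>\<^sub>m 1\<^sub>m n"
  have Bc: "B \<in> carrier_mat n n" unfolding B_def using A by simp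
  have Bs: "transpose_mat B = B"
  proof (rule eq_matI)
    fix i j assume ij: "i < dim_row B" "j < dim_col B"
    then have i: "i < n" and j: "j < n" using Bc by auto
    have Aij: "A $$ (j,i) = A $$ (i,j)" using arg_cong[OF s, of "\<lambda>M. M $$ (i,j)"] A i j by simp
    show "transpose_mat B $$ (i,j) = B $$ (i,j)" using i j A Bc Aij unfolding B_def by simp
  qed (use Bc in auto)
  have Bx: "B *\<^sub>v x = A *\<^sub>v x + ts \<cdot>\<^sub>v x" if x: "x \<in> carrier_vec n" for x
    unfolding B_def using A x by (simp add: add_mult_distrib_mat_vec[of _ n n] smult_one_mult)
  have qB: "x \<bullet> (B *\<^sub>v x) = x \<bullet> (A *\<^sub>v x) + ts * (x \<bullet> x)" if x: "x \<in> carrier_vec n" for x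
    using A x by (simp add: Bx scalar_prod_add_distrib[of _ n])
  have Bpsd: "0 \<le> x \<bullet> (B *\<^sub>v x)" if x: "x \<in> carrier_vec n" for x
    using tsT x unfolding T_def qB[OF x] by blast
  have "det B = 0"
  proof (rule ccontr)
    assume dB: "det B \<noteq> 0"
    from det_non_zero_imp_unit[OF Bc dB, of undefined]
    obtain Bi where Bi: "Bi \<in> carrier_mat n n" and BBi: "B * Bi = 1\<^sub>m n"
      unfolding Units_def ring_mat_def by auto
    define K where "K = SA n Bi + 1"
    have Kp: "0 < K" unfolding K_def using SA_nonneg[of n Bi] by simp
    have key: "x \<bullet> x \<le> K * (x \<bullet> (B *\<^sub>v x))" if x: "x \<in> carrier_vec n" for x
    proof -
      define y where "y = Bi *\<^sub>v x"
      have y: "y \<in> carrier_vec n" unfolding y_def using Bi x by simp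
      have By: "B *\<^sub>v y = x" unfolding y_def using Bc Bi x
        by (metis assoc_mult_mat_vec BBi one_mult_mat_vec)
      have cs: "(x \<bullet> (B *\<^sub>v y))^2 \<le> (x \<bullet> (B *\<^sub>v x)) * (y \<bullet> (B *\<^sub>v y))"
        by (rule cs_form[OF Bc Bs x y], rule Bpsd, insert x y, simp)
      have yBy: "y \<bullet> (B *\<^sub>v y) \<le> SA n Bi * (x \<bullet> x)"
      proof -
        have "y \<bullet> (B *\<^sub>v y) = x \<bullet> (Bi *\<^sub>v x)" unfolding By using x y
          comm_scalar_prod[of y n x] unfolding y_def by simp
        also have "\<dots> \<le> SA n Bi * (x \<bullet> x)" using quad_bound[OF Bi x] by simp
        finally show ?thesis .
      qed
      have xx: "0 \<le> x \<bullet> x" by (rule self_nonneg[OF x])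
      have xB: "0 \<le> x \<bullet> (B *\<^sub>v x)" by (rule Bpsd[OF x])
      have "(x \<bullet> x) * (x \<bullet> x) \<le> (x \<bullet> (B *\<^sub>v x)) * (SA n Bi * (x \<bullet> x))"
        using cs By yBy xB by (metis power2_eq_square mult_left_mono order_trans)
      then have "x \<bullet> x \<le> (x \<bullet> (B *\<^sub>v x)) * SA n Bi \<or> x \<bullet> x = 0"
        using xx by (metis mult.assoc mult.commute mult_right_le_imp_le order_le_less)
      then show ?thesis using xB xx SA_nonneg[of n Bi] unfolding K_def
        by (auto simp: algebra_simps)
    qed
    have "ts - 1/K \<in> T" unfolding T_def
    proof (intro CollectI ballI)
      fix x :: "real vec" assume x: "x \<in> carrier_vec n"
      have "x \<bullet> x / K \<le> x \<bullet> (B *\<^sub>v x)" using key[OF x] Kp by (simp add: field_simps)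
      then show "0 \<le> x \<bullet> (A *\<^sub>v x) + (ts - 1/K) * (x \<bullet> x)" using qB[OF x]
        by (simp add: algebra_simps)
    qed
    then have "ts \<le> ts - 1/K" unfolding ts_def by (rule cInf_lower[OF _ bdd])
    then show False using Kp by simp
  qed
  then obtain z where z: "z \<in> carrier_vec n" and z0: "z \<noteq> 0\<^sub>v n" and Bz: "B *\<^sub>v z = 0\<^sub>v n"
    using det_0_iff_vec_prod_zero[OF Bc] by auto
  have Az: "A *\<^sub>v z = (-ts) \<cdot>\<^sub>v z"
  proof (rule eq_vecI)
    fix i assume "i < dim_vec ((-ts) \<cdot>\<^sub>v z)"
    then have i: "i < n" using z by simp
    have "(B *\<^sub>v z) $ i = 0" using Bz i by simp
    then have "(A *\<^sub>v z) $ i + ts * z $ i = 0" using Bx[OF z] i A z by simp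
    then show "(A *\<^sub>v z) $ i = ((-ts) \<cdot>\<^sub>v z) $ i" using i z by simp
  qed (use A z in simp)
  show ?thesis
  proof (intro exI conjI ballI)
    show "z \<in> carrier_vec n" "z \<noteq> 0\<^sub>v n" "A *\<^sub>v z = (-ts) \<cdot>\<^sub>v z" by fact+
    fix x :: "real vec" assume x: "x \<in> carrier_vec n"
    show "(-ts) * (x \<bullet> x) \<le> x \<bullet> (A *\<^sub>v x)" using tsT x unfolding T_def by force
  qed
qed

lemma perp_exists:
  assumes vsc: "\<And>i. i < k \<Longrightarrow> (vs i :: real vec) \<in> carrier_vec n" and kn: "k < n"
  shows "\<exists>y. y \<in> carrier_vec n \<and> y \<noteq> 0\<^sub>v n \<and> (\<forall>i<k. vs i \<bullet> y = 0)"
proof -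
  define c where "c = (\<lambda>i. if i < k then vs i else 0\<^sub>v n)"
  define R where "R = mat\<^sub>r n n (\<lambda>i. if i = n - 1 then 0\<^sub>v n else c i)"
  have cc: "c \<in> {0..<n} \<rightarrow> carrier_vec n" unfolding c_def using vsc by auto
  have "det R = 0" unfolding R_def by (rule det_row_0, insert kn cc, auto)
  moreover have Rc: "R \<in> carrier_mat n n" unfolding R_def by simp
  ultimately obtain y where y: "y \<in> carrier_vec n" "y \<noteq> 0\<^sub>v n" and Ry: "R *\<^sub>v y = 0\<^sub>v n"
    using det_0_iff_vec_prod_zero[OF Rc] by auto
  have "vs i \<bullet> y = 0" if i: "i < k" for i
  proof -
    have "(R *\<^sub>v y) $ i = 0" using Ry i kn by simp
    moreover have "(R *\<^sub>v y) $ i = row R i \<bullet> y" using Rc i kn by simp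
    moreover have "row R i = vs i" unfolding R_def using i kn vsc[OF i]
      by (subst row_mat_of_row_fun) (auto simp: c_def)
    ultimately show ?thesis by simp
  qed
  then show ?thesis using y by blast
qed

lemma step_eig:
  fixes A :: "real mat"
  assumes A: "A \<in> carrier_mat n n" and s: "transpose_mat A = A" and kn: "k < n"
    and vsc: "\<And>i. i < k \<Longrightarrow> vs i \<in> carrier_vec n"
    and evs: "\<And>i. i < k \<Longrightarrow> A *\<^sub>v vs i = ds i \<cdot>\<^sub>v vs i"
    and orth: "\<And>i j. i < k \<Longrightarrow> j < k \<Longrightarrow> vs i \<bullet> vs j = (if i = j then 1 else 0)"
  shows "\<exists>z \<mu>. z \<in> carrier_vec n \<and> z \<bullet> z = 1 \<and> A *\<^sub>v z = \<mu> \<cdot>\<^sub>v z \<and> (\<forall>i<k. vs i \<bullet> z = 0)"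
proof -
  define c where "c = 2 * SA n A + 1"
  define C where "C = mat n n (\<lambda>(i,j). A $$ (i,j) + c * (\<Sum>l<k. vs l $ i * vs l $ j))"
  have Cc: "C \<in> carrier_mat n n" unfolding C_def by simp
  have Asym: "A $$ (j,i) = A $$ (i,j)" if "i < n" "j < n" for i j
    using arg_cong[OF s, of "\<lambda>M. M $$ (i,j)"] A that by simp
  have Cs: "transpose_mat C = C"
    by (rule eq_matI, insert Asym, auto simp: C_def mult.commute)
  have Cform: "(C *\<^sub>v x) $ i = (A *\<^sub>v x) $ i + c * (\<Sum>l<k. vs l $ i * (vs l \<bullet> x))"
    if x: "x \<in> carrier_vec n" and i: "i < n" for x i
  proof -
    have "(C *\<^sub>v x) $ i = (\<Sum>j<n. (A $$ (i,j) + c * (\<Sum>l<k. vs l $ i * vs l $ j)) * x $ j)"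
      using x i Cc by (simp add: C_def scalar_prod_def atLeast0LessThan)
    also have "\<dots> = (\<Sum>j<n. A $$ (i,j) * x $ j) + c * (\<Sum>j<n. \<Sum>l<k. vs l $ i * (vs l $ j * x $ j))"
      by (simp add: sum.distrib sum_distrib_left sum_distrib_right algebra_simps)
    also have "(\<Sum>j<n. \<Sum>l<k. vs l $ i * (vs l $ j * x $ j)) = (\<Sum>l<k. \<Sum>j<n. vs l $ i * (vs l $ j * x $ j))"
      by (rule sum.swap)
    also have "\<dots> = (\<Sum>l<k. vs l $ i * (vs l \<bullet> x))"
      using x by (simp add: scalar_prod_def atLeast0LessThan sum_distrib_left)
    also have "(\<Sum>j<n. A $$ (i,j) * x $ j) = (A *\<^sub>v x) $ i"
      using x i A by (simp add: scalar_prod_def atLeast0LessThan)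
    finally show ?thesis .
  qed
  have CA: "C *\<^sub>v x = A *\<^sub>v x" if x: "x \<in> carrier_vec n" and perp: "\<forall>l<k. vs l \<bullet> x = 0" for x
  proof (rule eq_vecI)
    fix i assume "i < dim_vec (A *\<^sub>v x)"
    then have i: "i < n" using A by simp
    show "(C *\<^sub>v x) $ i = (A *\<^sub>v x) $ i" using Cform[OF x i] perp by simp
  qed (use Cc A in simp)
  have Cv: "C *\<^sub>v vs j = (ds j + c) \<cdot>\<^sub>v vs j" if j: "j < k" for j
  proof (rule eq_vecI)
    fix i assume "i < dim_vec ((ds j + c) \<cdot>\<^sub>v vs j)"
    then have i: "i < n" using vsc[OF j] by simp
    have "(\<Sum>l<k. vs l $ i * (vs l \<bullet> vs j)) = (\<Sum>l<k. if l = j then vs j $ i else 0)"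
      by (rule sum.cong, auto simp: orth j)
    also have "\<dots> = vs j $ i" using j by simp
    finally have "(\<Sum>l<k. vs l $ i * (vs l \<bullet> vs j)) = vs j $ i" .
    then show "(C *\<^sub>v vs j) $ i = ((ds j + c) \<cdot>\<^sub>v vs j) $ i"
      using Cform[OF vsc[OF j] i] evs[OF j] i vsc[OF j] by (simp add: algebra_simps)
  qed (use Cc vsc[OF j] in simp)
  obtain z0 \<mu> where z0: "z0 \<in> carrier_vec n" "z0 \<noteq> 0\<^sub>v n" and Cz: "C *\<^sub>v z0 = \<mu> \<cdot>\<^sub>v z0"
    and ray: "\<And>x. x \<in> carrier_vec n \<Longrightarrow> \<mu> * (x \<bullet> x) \<le> x \<bullet> (C *\<^sub>v x)"
    using min_eig[OF Cc Cs] kn by force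
  obtain y0 where y0: "y0 \<in> carrier_vec n" "y0 \<noteq> 0\<^sub>v n" and yp: "\<forall>i<k. vs i \<bullet> y0 = 0"
    using perp_exists[of k vs n, OF vsc kn] by blast
  have mu: "\<mu> \<le> SA n A"
  proof -
    have "\<mu> * (y0 \<bullet> y0) \<le> y0 \<bullet> (A *\<^sub>v y0)" using ray[OF y0(1)] CA[OF y0(1) yp] by simp
    also have "\<dots> \<le> SA n A * (y0 \<bullet> y0)" using quad_bound[OF A y0(1)] by simp
    finally show ?thesis using vec_pos[OF y0] by simp
  qed
  have perp: "vs j \<bullet> z0 = 0" if j: "j < k" for j
  proof -
    have vj: "vs j \<in> carrier_vec n" by (rule vsc[OF j])
    have dsj: "ds j = vs j \<bullet> (A *\<^sub>v vs j)" using evs[OF j] orth[OF j j] vj by simp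
    have "\<bar>ds j\<bar> \<le> SA n A" using quad_bound[OF A vj] orth[OF j j] dsj by simp
    then have big: "\<mu> < ds j + c" using mu SA_nonneg[of n A] unfolding c_def by simp
    have "vs j \<bullet> (C *\<^sub>v z0) = z0 \<bullet> (C *\<^sub>v vs j)" by (rule bil_sym[OF Cc Cs vj z0(1)])
    then have "\<mu> * (vs j \<bullet> z0) = (ds j + c) * (z0 \<bullet> vs j)" using Cz Cv[OF j] vj z0 by simp
    then have "(ds j + c - \<mu>) * (vs j \<bullet> z0) = 0" using comm_scalar_prod[OF vj z0(1)]
      by (simp add: algebra_simps)
    then show ?thesis using big by simp
  qed
  have Az0: "A *\<^sub>v z0 = \<mu> \<cdot>\<^sub>v z0" using CA[OF z0(1)] perp Cz by simp
  define z where "z = (1 / sqrt (z0 \<bullet> z0)) \<cdot>\<^sub>v z0"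
  have pos: "0 < z0 \<bullet> z0" by (rule vec_pos[OF z0])
  have zc: "z \<in> carrier_vec n" unfolding z_def using z0 by simp
  have "z \<bullet> z = (1 / sqrt (z0 \<bullet> z0))^2 * (z0 \<bullet> z0)" unfolding z_def using z0
    by (simp add: power2_eq_square)
  also have "\<dots> = 1" using pos by (simp add: power_divide)
  finally have zz: "z \<bullet> z = 1" .
  have Az: "A *\<^sub>v z = \<mu> \<cdot>\<^sub>v z" unfolding z_def using A z0 Az0
    by (simp add: mult_mat_vec smult_smult_assoc mult.commute)
  have zp: "\<forall>i<k. vs i \<bullet> z = 0" unfolding z_def using perp vsc z0 by simp
  show ?thesis using zc zz Az zp by blast
qed

lemma eig_basis:
  fixes A :: "real mat"
  assumes A: "A \<in> carrier_mat n n" and s: "transpose_mat A = A"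
  shows "k \<le> n \<Longrightarrow> \<exists>vs ds. (\<forall>i<k. vs i \<in> carrier_vec n \<and> A *\<^sub>v vs i = ds i \<cdot>\<^sub>v vs i) \<and>
     (\<forall>i<k. \<forall>j<k. vs i \<bullet> vs j = (if i = j then 1 else (0::real)))"
proof (induction k)
  case 0
  then show ?case by auto
next
  case (Suc k)
  then obtain vs ds where h1: "\<forall>i<k. vs i \<in> carrier_vec n \<and> A *\<^sub>v vs i = ds i \<cdot>\<^sub>v vs i"
    and h2: "\<forall>i<k. \<forall>j<k. vs i \<bullet> vs j = (if i = j then 1 else (0::real))" by auto
  obtain z \<mu> where z: "z \<in> carrier_vec n" "z \<bullet> z = 1" "A *\<^sub>v z = \<mu> \<cdot>\<^sub>v z" "\<forall>i<k. vs i \<bullet> z = 0"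
    using step_eig[OF A s, of k vs ds] h1 h2 Suc by auto
  define vs' where "vs' = vs(k := z)"
  define ds' where "ds' = ds(k := \<mu>)"
  have "\<forall>i<Suc k. vs' i \<in> carrier_vec n \<and> A *\<^sub>v vs' i = ds' i \<cdot>\<^sub>v vs' i"
    using h1 z unfolding vs'_def ds'_def by (auto simp: less_Suc_eq)
  moreover have "\<forall>i<Suc k. \<forall>j<Suc k. vs' i \<bullet> vs' j = (if i = j then 1 else (0::real))"
  proof (intro allI impI)
    fix i j assume i: "i < Suc k" and j: "j < Suc k"
    show "vs' i \<bullet> vs' j = (if i = j then 1 else (0::real))"
    proof (cases "i = k")
      case True
      show ?thesis
      proof (cases "j = k")
        case True then show ?thesis using \<open>i = k\<close> z unfolding vs'_def by simp
      next
        case False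
        then have "j < k" using j by simp
        then show ?thesis using True False z h1 comm_scalar_prod[of z n "vs j"] unfolding vs'_def by auto
      qed
    next
      case False
      then have ik: "i < k" using i by simp
      show ?thesis
      proof (cases "j = k")
        case True then show ?thesis using ik z unfolding vs'_def by auto
      next
        case False
        then have "j < k" using j by simp
        then show ?thesis using ik h2 False \<open>i \<noteq> k\<close> unfolding vs'_def by auto
      qed
    qed
  qed
  ultimately show ?case by blast
qed

lemma order_prod_lin:
  "order l (\<Prod>a\<leftarrow>xs. [:- a, 1:]) = length (filter (\<lambda>a. a = l) xs)" for l :: real
proof (induction xs)
  case Nil
  then show ?case by (simp add: order_0I)
next
  case (Cons x xs)
  have nz: "(\<Prod>a\<leftarrow>xs. [:- a, 1:]) \<noteq> (0 :: real poly)"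
    by (auto simp: prod_list_zero_iff)
  have nz1: "[:- x, 1:] \<noteq> (0 :: real poly)" by simp
  have nz2: "[:- x, 1:] * (\<Prod>a\<leftarrow>xs. [:- a, 1:]) \<noteq> (0 :: real poly)"
    using nz nz1 mult_eq_0_iff by blast
  have ol: "order l [:- x, 1:] = (if x = l then 1 else 0)"
  proof (cases "x = l")
    case True
    then show ?thesis using order_power_n_n[of l 1] by simp
  next
    case False
    then have "order l [:- x, 1:] = 0" by (intro order_0I) simp
    then show ?thesis using False by simp
  qed
  show ?case using order_mult[OF nz2, of l] ol Cons by simp
qed

lemma spectral_facts:
  fixes A :: "real mat"
  assumes A: "A \<in> carrier_mat n n" and s: "transpose_mat A = A"
    and vsc: "\<And>i. i < n \<Longrightarrow> vs i \<in> carrier_vec n"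
    and evs: "\<And>i. i < n \<Longrightarrow> A *\<^sub>v vs i = ds i \<cdot>\<^sub>v vs i"
    and orth: "\<And>i j. i < n \<Longrightarrow> j < n \<Longrightarrow> vs i \<bullet> vs j = (if i = j then 1 else 0)"
  shows "num_neg_eigenvalues A = card {i. i < n \<and> ds i < 0}"
    and "\<And>x. x \<in> carrier_vec n \<Longrightarrow> x \<bullet> (A *\<^sub>v x) = (\<Sum>i<n. ds i * (vs i \<bullet> x)^2)"
proof -
  define P where "P = mat n n (\<lambda>(i,j). vs j $ i)"
  define D where "D = mat n n (\<lambda>(i,j). if i = j then ds i else (0::real))"
  have Pc: "P \<in> carrier_mat n n" and Dc: "D \<in> carrier_mat n n" and PTc: "transpose_mat P \<in> carrier_mat n n"
    unfolding P_def D_def by auto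
  have colP: "col P j = vs j" if j: "j < n" for j
    unfolding P_def by (rule eq_vecI, insert j vsc[OF j], auto)
  have PTP: "transpose_mat P * P = 1\<^sub>m n"
  proof (rule eq_matI)
    fix i j assume "i < dim_row (1\<^sub>m n :: real mat)" "j < dim_col (1\<^sub>m n :: real mat)"
    then have i: "i < n" and j: "j < n" by auto
    show "(transpose_mat P * P) $$ (i,j) = 1\<^sub>m n $$ (i,j)"
      using i j Pc colP orth by simp
  qed (use Pc in auto)
  have PPT: "P * transpose_mat P = 1\<^sub>m n"
    by (rule mat_mult_left_right_inverse[OF PTc Pc PTP])
  have AP: "A * P = P * D"
  proof (rule eq_matI)
    fix i j assume "i < dim_row (P * D)" "j < dim_col (P * D)"
    then have i: "i < n" and j: "j < n" using Pc Dc by auto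
    have "(A * P) $$ (i,j) = (A *\<^sub>v vs j) $ i" using A Pc i j colP[OF j] by simp
    also have "\<dots> = ds j * vs j $ i" using evs[OF j] vsc[OF j] i by simp
    also have "\<dots> = (P * D) $$ (i,j)"
    proof -
      have "col D j = ds j \<cdot>\<^sub>v unit_vec n j" unfolding D_def by (rule eq_vecI, insert j, auto)
      then have "(P * D) $$ (i,j) = row P i \<bullet> (ds j \<cdot>\<^sub>v unit_vec n j)" using Pc Dc i j by simp
      also have "\<dots> = ds j * (row P i $ j)" using Pc i j by (simp add: scalar_prod_right_unit)
      also have "\<dots> = ds j * vs j $ i" using Pc i j unfolding P_def by simp
      finally show ?thesis by simp
    qed
    finally show "(A * P) $$ (i,j) = (P * D) $$ (i,j)" .
  qed (use A Pc Dc in auto)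
  have AD: "A = P * D * transpose_mat P"
  proof -
    have "A = A * (P * transpose_mat P)" using PPT A by simp
    also have "\<dots> = (A * P) * transpose_mat P" using A Pc PTc by (simp add: assoc_mult_mat)
    finally show ?thesis using AP by simp
  qed
  have sim: "similar_mat A D"
    unfolding similar_mat_def similar_mat_wit_def
    by (rule exI[of _ P], rule exI[of _ "transpose_mat P"], insert A Pc Dc PTc PPT PTP AD, auto simp: Let_def)
  have ut: "upper_triangular D" unfolding D_def upper_triangular_def by auto
  have cp: "char_poly A = (\<Prod>a\<leftarrow>map ds [0..<n]. [:- a, 1:])"
    unfolding char_poly_similar[OF sim] char_poly_upper_triangular[OF Dc ut]
    by (rule arg_cong[where f = "\<lambda>xs. \<Prod>a\<leftarrow>xs. [:- a, 1:]"], unfold diag_mat_def D_def, auto)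
  have ord: "order l (char_poly A) = card {i. i < n \<and> ds i = l}" for l
    unfolding cp order_prod_lin length_filter_conv_card
    by (intro arg_cong[where f=card] Collect_cong) auto
  have cpnz: "char_poly A \<noteq> 0" unfolding cp by (auto simp: prod_list_zero_iff)
  have ev: "eigenvalue A l \<longleftrightarrow> (\<exists>i<n. ds i = l)" for l
  proof -
    have "eigenvalue A l \<longleftrightarrow> order l (char_poly A) \<noteq> 0"
      unfolding eigenvalue_root_char_poly[OF A] using order_root cpnz by blast
    also have "\<dots> \<longleftrightarrow> (\<exists>i<n. ds i = l)" unfolding ord by auto
    finally show ?thesis .
  qed
  have L: "{l. l < 0 \<and> eigenvalue A l} = ds ` {i. i < n \<and> ds i < 0}"
    unfolding ev by auto
  have "card {i. i < n \<and> ds i < 0} = card (\<Union>l\<in>ds ` {i. i < n \<and> ds i < 0}. {i. i < n \<and> ds i = l})"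
    by (rule arg_cong[where f = card], auto)
  also have "\<dots> = (\<Sum>l\<in>ds ` {i. i < n \<and> ds i < 0}. card {i. i < n \<and> ds i = l})"
    by (rule card_UN_disjoint, auto)
  finally show "num_neg_eigenvalues A = card {i. i < n \<and> ds i < 0}"
    unfolding num_neg_eigenvalues_def L ord by simp
  fix x :: "real vec" assume x: "x \<in> carrier_vec n"
  define y where "y = transpose_mat P *\<^sub>v x"
  have yc: "y \<in> carrier_vec n" unfolding y_def using PTc x by simp
  have yi: "y $ i = vs i \<bullet> x" if i: "i < n" for i
    unfolding y_def using i Pc x colP[OF i] by simp
  have Dy: "D *\<^sub>v y = vec n (\<lambda>i. ds i * y $ i)"
  proof (rule eq_vecI)
    fix i assume "i < dim_vec (vec n (\<lambda>i. ds i * y $ i))"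
    then have i: "i < n" by simp
    have "row D i = ds i \<cdot>\<^sub>v unit_vec n i" unfolding D_def by (rule eq_vecI, insert i, auto)
    then show "(D *\<^sub>v y) $ i = vec n (\<lambda>i. ds i * y $ i) $ i" using i Dc yc
      by (simp add: scalar_prod_left_unit)
  qed (use Dc in simp)
  have "x \<bullet> (A *\<^sub>v x) = x \<bullet> (P *\<^sub>v (D *\<^sub>v y))"
    unfolding y_def using AD Pc Dc PTc x by (simp add: assoc_mult_mat_vec[of _ n n _ n])
  also have "\<dots> = y \<bullet> (D *\<^sub>v y)"
    unfolding y_def using transpose_vec_mult_scalar[OF Pc _ x, of "D *\<^sub>v (transpose_mat P *\<^sub>v x)"] Dc PTc x
    by simp
  also have "\<dots> = (\<Sum>i<n. ds i * (vs i \<bullet> x)^2)"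
    unfolding Dy using yc by (simp add: scalar_prod_def atLeast0LessThan yi power2_eq_square algebra_simps)
  finally show "x \<bullet> (A *\<^sub>v x) = (\<Sum>i<n. ds i * (vs i \<bullet> x)^2)" .
qed

lemma F1:
  fixes A :: "real mat"
  assumes A: "A \<in> carrier_mat n n" and s: "transpose_mat A = A"
    and one: "num_neg_eigenvalues A = 1"
    and ev: "eigenvector A u lam" and lam: "lam < 0"
    and w: "w \<in> carrier_vec n" and uw: "u \<bullet> w = 0"
  shows "0 \<le> w \<bullet> (A *\<^sub>v w)"
proof (rule ccontr)
  assume neg: "\<not> 0 \<le> w \<bullet> (A *\<^sub>v w)"
  obtain vs ds where h1: "\<forall>i<n. vs i \<in> carrier_vec n \<and> A *\<^sub>v vs i = ds i \<cdot>\<^sub>v vs i"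
    and h2: "\<forall>i<n. \<forall>j<n. vs i \<bullet> vs j = (if i = j then 1 else (0::real))"
    using eig_basis[OF A s, of n] by auto
  note sf = spectral_facts[OF A s, of vs ds]
  have "num_neg_eigenvalues A = card {i. i < n \<and> ds i < 0}"
    by (rule sf(1)) (use h1 h2 in blast)+
  then have card1: "card {i. i < n \<and> ds i < 0} = 1" using one by simp
  then obtain k where kk: "{i. i < n \<and> ds i < 0} = {k}" by (rule card_1_singletonE)
  have "k \<in> {i. i < n \<and> ds i < 0}" using kk by simp
  then have k: "k < n" by simp
  have dpos: "0 \<le> ds i" if i: "i < n" and ik: "i \<noteq> k" for i
  proof (rule ccontr)
    assume "\<not> 0 \<le> ds i"
    then have "i \<in> {i. i < n \<and> ds i < 0}" using i by simp
    then show False using kk ik by simp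
  qed
  have qf: "x \<bullet> (A *\<^sub>v x) = (\<Sum>i<n. ds i * (vs i \<bullet> x)^2)" if "x \<in> carrier_vec n" for x
    by (rule sf(2)) (use h1 h2 that in blast)+
  have nonneg: "0 \<le> x \<bullet> (A *\<^sub>v x)" if x: "x \<in> carrier_vec n" and p: "vs k \<bullet> x = 0" for x
    unfolding qf[OF x]
  proof (rule sum_nonneg)
    fix i assume "i \<in> {..<n}"
    then have i: "i < n" by simp
    show "0 \<le> ds i * (vs i \<bullet> x)^2"
    proof (cases "i = k")
      case True then show ?thesis using p by simp
    next
      case False then show ?thesis using dpos[OF i] by simp
    qed
  qed
  have u: "u \<in> carrier_vec n" and u0: "u \<noteq> 0\<^sub>v n" and Au: "A *\<^sub>v u = lam \<cdot>\<^sub>v u"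
    using ev A unfolding eigenvector_def by auto
  have uu: "0 < u \<bullet> u" by (rule vec_pos[OF u u0])
  have Qu: "u \<bullet> (A *\<^sub>v u) = lam * (u \<bullet> u)" using Au u by simp
  have Buw: "u \<bullet> (A *\<^sub>v w) = 0"
    using bil_sym[OF A s u w] Au u w uw comm_scalar_prod[OF w u] by simp
  have vk: "vs k \<in> carrier_vec n" using h1 k by simp
  define a where "a = vs k \<bullet> w"
  define b where "b = - (vs k \<bullet> u)"
  define z where "z = a \<cdot>\<^sub>v u + b \<cdot>\<^sub>v w"
  have zc: "z \<in> carrier_vec n" unfolding z_def using u w by simp
  have "vs k \<bullet> z = a * (vs k \<bullet> u) + b * (vs k \<bullet> w)" unfolding z_def using u w vk
    by (simp add: scalar_prod_add_distrib[of _ n])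
  then have pz: "vs k \<bullet> z = 0" unfolding a_def b_def by simp
  have "z \<bullet> (A *\<^sub>v z) = a^2 * (lam * (u \<bullet> u)) + b^2 * (w \<bullet> (A *\<^sub>v w))"
    unfolding z_def expand2[OF A s u w] Qu Buw by simp
  moreover have "0 \<le> z \<bullet> (A *\<^sub>v z)" by (rule nonneg[OF zc pz])
  moreover have "a^2 * (lam * (u \<bullet> u)) \<le> 0"
  proof -
    have "lam * (u \<bullet> u) \<le> 0" using lam uu by (simp add: mult_neg_pos less_imp_le)
    then show ?thesis by (simp add: mult_nonneg_nonpos)
  qed
  moreover have "b^2 * (w \<bullet> (A *\<^sub>v w)) \<le> 0" using neg by (simp add: mult_nonneg_nonpos)
  ultimately have "b^2 * (w \<bullet> (A *\<^sub>v w)) = 0" by linarith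
  then have "b = 0" using neg by simp
  then have "vs k \<bullet> u = 0" unfolding b_def by simp
  then have "0 \<le> u \<bullet> (A *\<^sub>v u)" by (rule nonneg[OF u])
  moreover have "lam * (u \<bullet> u) < 0" using lam uu by (rule mult_neg_pos)
  ultimately show False using Qu by simp
qed

lemma RL1:
  fixes p N \<kappa> r X Y :: real
  assumes p: "0 < p" and N: "0 < N" and k: "0 \<le> \<kappa>" and r: "0 \<le> r" and D: "N*\<kappa> \<le> p^2"
    and X: "0 \<le> X" and XN: "r \<le> N*X^2" and Y: "Y^2 \<le> \<kappa>*(N*X^2 - r)"
  shows "sqrt (p^2 - N*\<kappa>) * sqrt (r/N) \<le> p*X + Y"
    and "p*X + Y = sqrt (p^2 - N*\<kappa>) * sqrt (r/N) \<Longrightarrow>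
         sqrt (p^2 - N*\<kappa>) * X = p * sqrt (r/N) \<and> Y^2 = \<kappa>*(N*X^2 - r)"
proof -
  define a where "a = sqrt (r/N)"
  define sd where "sd = sqrt (p^2 - N*\<kappa>)"
  have a0: "0 \<le> a" unfolding a_def using r N by simp
  have a2: "a^2 = r/N" unfolding a_def using r N by simp
  have Na: "N * a^2 = r" using a2 N by simp
  have sd0: "0 \<le> sd" unfolding sd_def using D by simp
  have sd2: "sd^2 = p^2 - N*\<kappa>" unfolding sd_def using D by simp
  have "N * a^2 \<le> N * X^2" using Na XN by simp
  then have "a^2 \<le> X^2" using N by simp
  then have Xa: "a \<le> X" using X by (rule power2_le_imp_le)
  have "0 \<le> N*\<kappa>" using N k by simp
  then have "sd^2 \<le> p^2" using sd2 by simp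
  moreover have "0 \<le> p" using p by simp
  ultimately have sdp: "sd \<le> p" by (rule power2_le_imp_le)
  have "sd * a \<le> p * a" by (rule mult_right_mono[OF sdp a0])
  also have "\<dots> \<le> p * X" using Xa p by (simp add: mult_left_mono)
  finally have nn: "0 \<le> p*X - sd*a" by simp
  have ident: "(p*X - sd*a)^2 = \<kappa>*(N*X^2 - r) + (sd*X - p*a)^2"
  proof -
    have "(p*X - sd*a)^2 - (\<kappa>*(N*X^2 - N*a^2) + (sd*X - p*a)^2) = (p^2 - N*\<kappa> - sd^2)*(X^2 - a^2)"
      by (simp add: power2_eq_square algebra_simps)
    then show ?thesis using sd2 Na by simp
  qed
  have "0 \<le> (sd*X - p*a)^2" by simp
  then have "Y^2 \<le> (p*X - sd*a)^2" using Y ident by linarith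
  then have "\<bar>Y\<bar>^2 \<le> (p*X - sd*a)^2" by simp
  then have "\<bar>Y\<bar> \<le> p*X - sd*a" using nn by (rule power2_le_imp_le)
  then show "sqrt (p^2 - N*\<kappa>) * sqrt (r/N) \<le> p*X + Y" unfolding a_def[symmetric] sd_def[symmetric]
    by simp
  assume eq: "p*X + Y = sqrt (p^2 - N*\<kappa>) * sqrt (r/N)"
  then have Yeq: "Y = -(p*X - sd*a)" unfolding a_def[symmetric] sd_def[symmetric] by simp
  then have "Y^2 = (p*X - sd*a)^2" by (simp only: power2_minus)
  then have "(sd*X - p*a)^2 \<le> 0" using Y ident by simp
  then have z: "sd*X - p*a = 0" by simp
  then have "Y^2 = \<kappa>*(N*X^2 - r)" using ident \<open>Y^2 = (p*X - sd*a)^2\<close> by simp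
  then show "sqrt (p^2 - N*\<kappa>) * X = p * sqrt (r/N) \<and> Y^2 = \<kappa>*(N*X^2 - r)"
    using z unfolding a_def[symmetric] sd_def[symmetric] by simp
qed



theorem mainTheorem17:
  fixes n :: nat and M :: "real mat" and \<beta> u :: "real vec"
    and \<gamma> lam s :: real and S :: "real vec set"
  assumes n2: "n \<ge> 2"
    and M: "M \<in> carrier_mat n n" and sym: "transpose_mat M = M"
    and inv: "invertible_mat M"
    and one_neg: "num_neg_eigenvalues M = 1"
    and beta: "\<beta> \<in> carrier_vec n"
    and hyp: "qstar M \<beta> \<gamma> \<le> 0"
    and lamneg: "lam < 0" and u_eig: "eigenvector M u lam" and u_unit: "u \<bullet> u = 1"
    and s: "s = 1 \<or> s = -1"
    and S: "S = branch n M \<beta> \<gamma> u s"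
    and fin: "(INF x\<in>S. ereal (x $ (n - 1))) > -\<infinity>"
    and not_unique: "\<not> (\<exists>!x. x \<in> S \<and> ereal (x $ (n - 1)) = (INF x\<in>S. ereal (x $ (n - 1))))"
  shows "(INF x\<in>S \<inter> int_vecs n. ereal (x $ (n - 1))) - (INF x\<in>S. ereal (x $ (n - 1))) \<le> 1"
proof -
  have n1: "n - 1 < n" using n2 by simp
  from inv obtain B where MB0: "inverts_mat M B" and BM0: "inverts_mat B M"
    unfolding invertible_mat_def by auto
  have MB: "M * B = 1\<^sub>m n" using MB0 M unfolding inverts_mat_def by simp
  have Bc: "B \<in> carrier_mat n n"
  proof -
    have "dim_col (M * B) = n" using MB by simp
    then have c: "dim_col B = n" by simp
    have "B * M = 1\<^sub>m (dim_row B)" using BM0 unfolding inverts_mat_def by simp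
    then have "dim_col (B * M) = dim_row B" by simp
    then have "dim_row B = n" using M by simp
    then show ?thesis using c by auto
  qed
  have BM: "B * M = 1\<^sub>m n" using BM0 Bc unfolding inverts_mat_def by simp
  have unit: "M \<in> Units (ring_mat TYPE(real) n undefined)"
    unfolding Units_def ring_mat_def using M Bc MB BM by auto
  obtain Mi where mi: "mat_inverse M = Some Mi"
    using mat_inverse(1)[OF M, of undefined] unit by (cases "mat_inverse M") auto
  have Mi: "Mi \<in> carrier_mat n n" and MMi: "M * Mi = 1\<^sub>m n" and MiM: "Mi * M = 1\<^sub>m n"
    using mat_inverse(2)[OF M mi] by auto
  define c0 where "c0 = centre M \<beta>"
  have c0: "c0 \<in> carrier_vec n" unfolding c0_def centre_def mi using Mi beta by simp
  define r where "r = - qstar M \<beta> \<gamma>"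
  have r0: "0 \<le> r" using hyp unfolding r_def by simp
  have u: "u \<in> carrier_vec n" and u0: "u \<noteq> 0\<^sub>v n" and Mu: "M *\<^sub>v u = lam \<cdot>\<^sub>v u"
    using u_eig M unfolding eigenvector_def by auto
  have s2: "s * s = 1" using s by auto
  have sn0: "s \<noteq> 0" using s by auto
  define v where "v = s \<cdot>\<^sub>v u"
  have vc: "v \<in> carrier_vec n" unfolding v_def using u by simp
  have Mv: "M *\<^sub>v v = lam \<cdot>\<^sub>v v" unfolding v_def using M u Mu
    by (simp add: mult_mat_vec smult_smult_assoc mult.commute)
  have vv: "v \<bullet> v = 1" unfolding v_def using u u_unit s2 by simp
  define N where "N = - lam"
  have N0: "0 < N" using lamneg N_def by simp
  define e where "e = (unit_vec n (n - 1) :: real vec)"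
  have ec: "e \<in> carrier_vec n" unfolding e_def by simp
  have edot: "e \<bullet> x = x $ (n - 1)" if "x \<in> carrier_vec n" for x :: "real vec"
    unfolding e_def using n1 that by (simp add: scalar_prod_left_unit)
  have ee: "e \<bullet> e = 1" using edot[OF ec] n1 unfolding e_def by simp
  define p where "p = e \<bullet> v"
  define h where "h = e - p \<cdot>\<^sub>v v"
  have hc: "h \<in> carrier_vec n" unfolding h_def using ec vc by simp
  have vh: "v \<bullet> h = 0"
  proof -
    have "v \<bullet> h = v \<bullet> e - v \<bullet> (p \<cdot>\<^sub>v v)" unfolding h_def
      by (rule scalar_prod_minus_distrib[OF vc ec], use vc in simp)
    also have "\<dots> = p - p" using vc ec vv comm_scalar_prod[OF vc ec] unfolding p_def by simp
    finally show ?thesis by simp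
  qed
  define w0 where "w0 = Mi *\<^sub>v h"
  have w0c: "w0 \<in> carrier_vec n" unfolding w0_def using Mi hc by simp
  have Mw0: "M *\<^sub>v w0 = h" unfolding w0_def using M Mi hc MMi
    by (metis assoc_mult_mat_vec one_mult_mat_vec)
  have symB: "x \<bullet> (M *\<^sub>v y) = y \<bullet> (M *\<^sub>v x)" if "x \<in> carrier_vec n" "y \<in> carrier_vec n" for x y
    using bil_sym[OF M sym that] .
  have vperp: "w \<bullet> (M *\<^sub>v v) = 0" if w: "w \<in> carrier_vec n" and vw: "v \<bullet> w = 0" for w
    using Mv w vc vw comm_scalar_prod[OF w vc] by simp
  have vw0: "v \<bullet> w0 = 0"
  proof -
    have "v \<bullet> (M *\<^sub>v w0) = w0 \<bullet> (M *\<^sub>v v)" by (rule symB[OF vc w0c])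
    then have "lam * (w0 \<bullet> v) = 0" using Mw0 vh Mv w0c vc by simp
    then have "w0 \<bullet> v = 0" using lamneg by simp
    then show ?thesis using comm_scalar_prod[OF w0c vc] by simp
  qed
  define \<kappa> where "\<kappa> = h \<bullet> w0"
  have F1': "0 \<le> w \<bullet> (M *\<^sub>v w)" if w: "w \<in> carrier_vec n" and vw: "v \<bullet> w = 0" for w
  proof -
    have "s * (u \<bullet> w) = 0" using vw u w unfolding v_def by simp
    then have "u \<bullet> w = 0" using sn0 by simp
    then show ?thesis by (rule F1[OF M sym one_neg u_eig lamneg w])
  qed
  have kq: "\<kappa> = w0 \<bullet> (M *\<^sub>v w0)" unfolding \<kappa>_def Mw0 using comm_scalar_prod[OF hc w0c] by simp
  have k0: "0 \<le> \<kappa>" using F1'[OF w0c vw0] kq by simp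
  have CS: "(h \<bullet> w)^2 \<le> \<kappa> * (w \<bullet> (M *\<^sub>v w))" if w: "w \<in> carrier_vec n" and vw: "v \<bullet> w = 0" for w
  proof -
    have "(w0 \<bullet> (M *\<^sub>v w))^2 \<le> (w0 \<bullet> (M *\<^sub>v w0)) * (w \<bullet> (M *\<^sub>v w))"
    proof (rule cs_form[OF M sym w0c w])
      fix t
      have c: "w0 + t \<cdot>\<^sub>v w \<in> carrier_vec n" using w0c w by simp
      have "v \<bullet> (w0 + t \<cdot>\<^sub>v w) = 0" using vc w0c w vw0 vw by (simp add: scalar_prod_add_distrib[of _ n])
      then show "0 \<le> (w0 + t \<cdot>\<^sub>v w) \<bullet> (M *\<^sub>v (w0 + t \<cdot>\<^sub>v w))" by (rule F1'[OF c])
    qed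
    moreover have "w0 \<bullet> (M *\<^sub>v w) = h \<bullet> w" using symB[OF w0c w] Mw0 comm_scalar_prod[OF w hc] by simp
    ultimately show ?thesis using kq by simp
  qed
  have decQ: "(X \<cdot>\<^sub>v v + w) \<bullet> (M *\<^sub>v (X \<cdot>\<^sub>v v + w)) = - N * X^2 + w \<bullet> (M *\<^sub>v w)"
    if w: "w \<in> carrier_vec n" and vw: "v \<bullet> w = 0" for X w
  proof -
    have e1: "X \<cdot>\<^sub>v v + w = X \<cdot>\<^sub>v v + 1 \<cdot>\<^sub>v w" by simp
    have "v \<bullet> (M *\<^sub>v v) = lam" using Mv vv vc by simp
    moreover have "v \<bullet> (M *\<^sub>v w) = 0" using symB[OF vc w] vperp[OF w vw] by simp
    ultimately show ?thesis unfolding e1 expand2[OF M sym vc w, of X 1] N_def by simp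
  qed
  have decE: "e \<bullet> (X \<cdot>\<^sub>v v + w) = X * p + h \<bullet> w"
    if w: "w \<in> carrier_vec n" and vw: "v \<bullet> w = 0" for X w
  proof -
    have "h \<bullet> w = e \<bullet> w - (p \<cdot>\<^sub>v v) \<bullet> w" unfolding h_def
      by (rule minus_scalar_prod_distrib[OF ec _ w], use vc in simp)
    then have "h \<bullet> w = e \<bullet> w" using vw vc w by simp
    then show ?thesis using ec vc w unfolding p_def by (simp add: scalar_prod_add_distrib[of _ n])
  qed
  have decV: "v \<bullet> (X \<cdot>\<^sub>v v + w) = X" if w: "w \<in> carrier_vec n" and vw: "v \<bullet> w = 0" for X w
    using vc w vw vv by (simp add: scalar_prod_add_distrib[of _ n])
  have split: "y = (v \<bullet> y) \<cdot>\<^sub>v v + (y - (v \<bullet> y) \<cdot>\<^sub>v v) \<and> y - (v \<bullet> y) \<cdot>\<^sub>v v \<in> carrier_vec n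
     \<and> v \<bullet> (y - (v \<bullet> y) \<cdot>\<^sub>v v) = 0" if y: "y \<in> carrier_vec n" for y
  proof (intro conjI)
    show "y = (v \<bullet> y) \<cdot>\<^sub>v v + (y - (v \<bullet> y) \<cdot>\<^sub>v v)"
      by (rule eq_vecI, insert y vc, auto)
    show "y - (v \<bullet> y) \<cdot>\<^sub>v v \<in> carrier_vec n" using y vc by simp
    have "v \<bullet> (y - (v \<bullet> y) \<cdot>\<^sub>v v) = v \<bullet> y - v \<bullet> ((v \<bullet> y) \<cdot>\<^sub>v v)"
      by (rule scalar_prod_minus_distrib[OF vc y], use vc in simp)
    then show "v \<bullet> (y - (v \<bullet> y) \<cdot>\<^sub>v v) = 0" using vc vv by simp
  qed
  have Smem: "c0 + y \<in> S" if y: "y \<in> carrier_vec n" and qy: "y \<bullet> (M *\<^sub>v y) \<le> - r" and vy: "0 \<le> v \<bullet> y" for y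
  proof -
    have "s * (u \<bullet> y) = v \<bullet> y" unfolding v_def using u y by simp
    then show ?thesis unfolding S branch_def c0_def using y qy vy r0 unfolding r_def by auto
  qed
  have Sdest: "\<exists>y. x = c0 + y \<and> y \<in> carrier_vec n \<and> y \<bullet> (M *\<^sub>v y) \<le> - r \<and> 0 \<le> v \<bullet> y"
    if x: "x \<in> S" for x
  proof -
    from x obtain y where y: "x = c0 + y" "y \<in> carrier_vec n" "y \<bullet> (M *\<^sub>v y) \<le> qstar M \<beta> \<gamma>"
      "0 \<le> s * (u \<bullet> y)" unfolding S branch_def c0_def by auto
    have "s * (u \<bullet> y) = v \<bullet> y" unfolding v_def using u y by simp
    then show ?thesis using y unfolding r_def by auto
  qed
  define c0n where "c0n = c0 $ (n - 1)"
  have Sval: "(c0 + y) $ (n - 1) = c0n + e \<bullet> y" if y: "y \<in> carrier_vec n" for y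
    using c0 n1 edot[OF y] y unfolding c0n_def by simp
  obtain L where L: "\<And>x. x \<in> S \<Longrightarrow> L \<le> x $ (n - 1)"
  proof (cases "(INF x\<in>S. ereal (x $ (n - 1)))")
    case (real L)
    show ?thesis
    proof (rule that[of L])
      fix x assume "x \<in> S"
      then have "(INF x\<in>S. ereal (x $ (n - 1))) \<le> ereal (x $ (n - 1))" by (rule INF_lower)
      then show "L \<le> x $ (n - 1)" using real by simp
    qed
  next
    case PInf
    show ?thesis
    proof (rule that[of 0])
      fix x assume "x \<in> S"
      then have "(INF x\<in>S. ereal (x $ (n - 1))) \<le> ereal (x $ (n - 1))" by (rule INF_lower)
      then show "0 \<le> x $ (n - 1)" using PInf by simp
    qed
  next
    case MInf
    then show ?thesis using fin by simp
  qed
  have LK: "L \<le> c0n + e \<bullet> y" if y: "y \<in> carrier_vec n" and qy: "y \<bullet> (M *\<^sub>v y) \<le> - r" and vy: "0 \<le> v \<bullet> y" for y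
    using L[OF Smem[OF y qy vy]] Sval[OF y] by simp
  have zV: "0\<^sub>v n \<in> carrier_vec n" "v \<bullet> 0\<^sub>v n = 0" using vc by auto
  have z0Q: "0\<^sub>v n \<bullet> (M *\<^sub>v 0\<^sub>v n) = (0::real)" using M by simp
  have p0: "0 \<le> p"
  proof (rule ccontr)
    assume "\<not> 0 \<le> p"
    then have pn: "p < 0" by simp
    define t where "t = 1 + r / N + \<bar>L - c0n\<bar> / (- p)"
    have rN: "0 \<le> r / N" using r0 N0 by simp
    have lp: "0 \<le> \<bar>L - c0n\<bar> / (- p)" by (rule divide_nonneg_pos) (use pn in auto)
    have t1: "1 \<le> t" unfolding t_def using rN lp by simp
    have trN: "r / N \<le> t" unfolding t_def using lp by simp
    have "r \<le> N * t" using trN N0 by (simp add: field_simps)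
    also have "N * t \<le> N * t^2" using t1 N0 by (simp add: power2_eq_square)
    finally have rt: "r \<le> N * t^2" .
    define y where "y = t \<cdot>\<^sub>v v + 0\<^sub>v n"
    have yc: "y \<in> carrier_vec n" unfolding y_def using vc by simp
    have qy: "y \<bullet> (M *\<^sub>v y) \<le> - r" unfolding y_def decQ[OF zV] using rt z0Q by simp
    have vy: "0 \<le> v \<bullet> y" unfolding y_def decV[OF zV] using t1 by simp
    have ey: "e \<bullet> y = t * p" unfolding y_def decE[OF zV] using hc by simp
    have "t * p = p + (r / N) * p - \<bar>L - c0n\<bar>" unfolding t_def using pn by (simp add: field_simps)
    also have "\<dots> < L - c0n" using pn rN by (smt (verit) mult_nonneg_nonpos)
    finally show False using LK[OF yc qy vy] ey by simp
  qed
  have Dle: "N * \<kappa> \<le> p^2"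
  proof (rule ccontr)
    assume "\<not> N * \<kappa> \<le> p^2"
    then have lt: "p^2 < N * \<kappa>" by simp
    have "0 < N * \<kappa>" using lt by (smt (verit) zero_le_power2)
    then have kp: "0 < \<kappa>" using N0 by (simp add: zero_less_mult_iff)
    define \<alpha> where "\<alpha> = sqrt (\<kappa> / N)"
    have \<alpha>0: "0 < \<alpha>" unfolding \<alpha>_def using kp N0 by simp
    have N\<alpha>2: "N * \<alpha>^2 = \<kappa>" unfolding \<alpha>_def using kp N0 by simp
    have "p = sqrt (p^2)" using p0 by simp
    also have "\<dots> < sqrt (N * \<kappa>)" using lt by (rule real_sqrt_less_mono)
    finally have psq: "p < sqrt (N * \<kappa>)" .
    have "\<alpha> * sqrt (N * \<kappa>) = sqrt (\<kappa> / N * (N * \<kappa>))" unfolding \<alpha>_def by (rule real_sqrt_mult[symmetric])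
    also have "\<kappa> / N * (N * \<kappa>) = \<kappa>^2" using N0 by (simp add: power2_eq_square)
    finally have "\<alpha> * sqrt (N * \<kappa>) = \<kappa>" using kp by simp
    then have \<alpha>p: "\<alpha> * p < \<kappa>" using psq \<alpha>0 by (metis mult_strict_left_mono)
    define g where "g = \<kappa> - \<alpha> * p"
    have g0: "0 < g" unfolding g_def using \<alpha>p by simp
    define t where "t = r / (2*N*\<alpha>) + (\<bar>L - c0n\<bar> + p + 1) / g"
    have t0a: "0 \<le> r / (2*N*\<alpha>)" using r0 N0 \<alpha>0 by simp
    have t0b: "0 \<le> (\<bar>L - c0n\<bar> + p + 1) / g" using g0 p0 by simp
    have t0: "0 \<le> t" unfolding t_def using t0a t0b by simp
    have tr: "r \<le> 2*N*\<alpha>*t"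
    proof -
      have e1: "2*N*\<alpha>*t = r + 2*N*\<alpha>*((\<bar>L - c0n\<bar> + p + 1) / g)"
        unfolding t_def using N0 \<alpha>0 by (simp add: distrib_left)
      have "0 \<le> 2*N*\<alpha>" using N0 \<alpha>0 by simp
      then have "0 \<le> 2*N*\<alpha>*((\<bar>L - c0n\<bar> + p + 1) / g)" using t0b by (rule mult_nonneg_nonneg)
      then show ?thesis using e1 by simp
    qed
    have tg: "\<bar>L - c0n\<bar> + p + 1 \<le> t * g"
    proof -
      have bg: "(\<bar>L - c0n\<bar> + p + 1) / g * g = \<bar>L - c0n\<bar> + p + 1" using g0 by simp
      have e1: "t * g = r / (2*N*\<alpha>) * g + (\<bar>L - c0n\<bar> + p + 1)"
        unfolding t_def distrib_right bg ..
      have "0 \<le> r / (2*N*\<alpha>) * g" using t0a g0 by (intro mult_nonneg_nonneg) auto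
      then show ?thesis using e1 by simp
    qed
    define X where "X = t * \<alpha> + 1"
    define w where "w = (- t) \<cdot>\<^sub>v w0"
    have wc: "w \<in> carrier_vec n" unfolding w_def using w0c by simp
    have vw: "v \<bullet> w = 0" unfolding w_def using vw0 w0c vc by simp
    have Qw: "w \<bullet> (M *\<^sub>v w) = t^2 * \<kappa>" unfolding w_def kq using M w0c
      by (simp add: mult_mat_vec power2_eq_square)
    have hw: "h \<bullet> w = - t * \<kappa>" unfolding w_def \<kappa>_def using hc w0c by simp
    define y where "y = X \<cdot>\<^sub>v v + w"
    have yc: "y \<in> carrier_vec n" unfolding y_def using vc wc by simp
    have "y \<bullet> (M *\<^sub>v y) = - N * X^2 + t^2 * \<kappa>" unfolding y_def decQ[OF wc vw] Qw ..
    also have "\<dots> = - 2*N*\<alpha>*t - N" unfolding X_def using N\<alpha>2[symmetric]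
      by (simp add: power2_eq_square algebra_simps)
    also have "\<dots> \<le> - r" using tr N0 by simp
    finally have qy: "y \<bullet> (M *\<^sub>v y) \<le> - r" .
    have vy: "0 \<le> v \<bullet> y" unfolding y_def decV[OF wc vw] X_def using t0 \<alpha>0 by simp
    have "e \<bullet> y = X * p + h \<bullet> w" unfolding y_def by (rule decE[OF wc vw])
    also have "\<dots> = p - t * g" unfolding X_def hw g_def by (simp add: algebra_simps)
    finally have ey: "e \<bullet> y = p - t * g" .
    have "c0n + e \<bullet> y < L" using ey tg by (smt (verit))
    then show False using LK[OF yc qy vy] by simp
  qed
  have ppos: "0 < p"
  proof (rule ccontr)
    assume "\<not> 0 < p"
    then have pz: "p = 0" using p0 by simp
    then have "\<kappa> = 0" using Dle k0 N0 by (simp add: mult_le_0_iff)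
    moreover have "h = e" unfolding h_def pz by (rule eq_vecI) (use ec vc in auto)
    ultimately have "(e \<bullet> e)^2 \<le> 0" using CS[OF hc vh] by simp
    then show False using ee by simp
  qed
  have DEF: "w = 0\<^sub>v n" if w: "w \<in> carrier_vec n" and vw: "v \<bullet> w = 0" and qw: "w \<bullet> (M *\<^sub>v w) = 0" for w
  proof -
    have all0: "w \<bullet> (M *\<^sub>v x) = 0" if x: "x \<in> carrier_vec n" for x
    proof -
      define Xx where "Xx = v \<bullet> x"
      obtain x' where x'c: "x' \<in> carrier_vec n" and vx': "v \<bullet> x' = 0" and xe: "x = Xx \<cdot>\<^sub>v v + x'"
        using split[OF x] unfolding Xx_def[symmetric] by blast
      have "(w \<bullet> (M *\<^sub>v x'))^2 \<le> (w \<bullet> (M *\<^sub>v w)) * (x' \<bullet> (M *\<^sub>v x'))"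
      proof (rule cs_form[OF M sym w x'c])
        fix t
        have c: "w + t \<cdot>\<^sub>v x' \<in> carrier_vec n" using w x'c by simp
        have "v \<bullet> (w + t \<cdot>\<^sub>v x') = 0" using vc w x'c vw vx' by (simp add: scalar_prod_add_distrib[of _ n])
        then show "0 \<le> (w + t \<cdot>\<^sub>v x') \<bullet> (M *\<^sub>v (w + t \<cdot>\<^sub>v x'))" by (rule F1'[OF c])
      qed
      then have z1: "w \<bullet> (M *\<^sub>v x') = 0" using qw by simp
      have "M *\<^sub>v x = Xx \<cdot>\<^sub>v (M *\<^sub>v v) + M *\<^sub>v x'" unfolding xe using M vc x'c
        by (simp add: mult_add_distrib_mat_vec mult_mat_vec)
      then have "w \<bullet> (M *\<^sub>v x) = Xx * (w \<bullet> (M *\<^sub>v v)) + w \<bullet> (M *\<^sub>v x')"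
        using w M vc x'c by (simp add: scalar_prod_add_distrib[of _ n])
      then show ?thesis using z1 vperp[OF w vw] by simp
    qed
    have Mwc: "M *\<^sub>v w \<in> carrier_vec n" using M w by simp
    have "(M *\<^sub>v w) \<bullet> (M *\<^sub>v w) = 0" using all0[OF Mwc] symB[OF w Mwc] by simp
    then have Mw: "M *\<^sub>v w = 0\<^sub>v n" using vec_pos[OF Mwc] by fastforce
    have "w = (Mi * M) *\<^sub>v w" using MiM w by simp
    also have "\<dots> = Mi *\<^sub>v (M *\<^sub>v w)" using Mi M w by simp
    also have "\<dots> = 0\<^sub>v n" unfolding Mw by (rule eq_vecI) (use Mi in auto)
    finally show ?thesis .
  qed
  define a where "a = sqrt (r / N)"
  define sd where "sd = sqrt (p^2 - N * \<kappa>)"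
  define m where "m = sd * a"
  have a0: "0 \<le> a" unfolding a_def using r0 N0 by simp
  have Na: "N * a^2 = r" unfolding a_def using r0 N0 by simp
  have sd0: "0 \<le> sd" unfolding sd_def using Dle by simp
  have sd2: "sd^2 = p^2 - N * \<kappa>" unfolding sd_def using Dle by simp
  have KA: "m \<le> e \<bullet> y \<and> (e \<bullet> y = m \<longrightarrow> sd * (v \<bullet> y) = p * a \<and>
       (h \<bullet> (y - (v \<bullet> y) \<cdot>\<^sub>v v))^2 = \<kappa> * (N * (v \<bullet> y)^2 - r))"
    if y: "y \<in> carrier_vec n" and qy: "y \<bullet> (M *\<^sub>v y) \<le> - r" and vy: "0 \<le> v \<bullet> y" for y
  proof -
    define X where "X = v \<bullet> y"
    define w where "w = y - X \<cdot>\<^sub>v v"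
    have ye: "y = X \<cdot>\<^sub>v v + w" and wc: "w \<in> carrier_vec n" and vw: "v \<bullet> w = 0"
      using split[OF y] unfolding X_def w_def by auto
    have Qy: "y \<bullet> (M *\<^sub>v y) = - N * X^2 + w \<bullet> (M *\<^sub>v w)" unfolding ye by (rule decQ[OF wc vw])
    have Ey: "e \<bullet> y = X * p + h \<bullet> w" unfolding ye by (rule decE[OF wc vw])
    have Qw0: "0 \<le> w \<bullet> (M *\<^sub>v w)" by (rule F1'[OF wc vw])
    have XN: "r \<le> N * X^2" using Qy qy Qw0 by simp
    have Yb: "(h \<bullet> w)^2 \<le> \<kappa> * (N * X^2 - r)"
    proof -
      have "w \<bullet> (M *\<^sub>v w) \<le> N * X^2 - r" using Qy qy by simp
      then have "\<kappa> * (w \<bullet> (M *\<^sub>v w)) \<le> \<kappa> * (N * X^2 - r)" using k0 by (rule mult_left_mono)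
      then show ?thesis using CS[OF wc vw] by simp
    qed
    have X0: "0 \<le> X" unfolding X_def by (rule vy)
    note R = RL1[OF ppos N0 k0 r0 Dle X0 XN Yb]
    show ?thesis
    proof (intro conjI impI)
      show "m \<le> e \<bullet> y" using R(1) Ey unfolding m_def sd_def a_def by (simp add: mult.commute)
      assume "e \<bullet> y = m"
      then have "p * X + h \<bullet> w = sqrt (p\<^sup>2 - N * \<kappa>) * sqrt (r / N)"
        using Ey unfolding m_def sd_def a_def by (simp add: mult.commute)
      from R(2)[OF this] show "sd * (v \<bullet> y) = p * a"
        and "(h \<bullet> (y - (v \<bullet> y) \<cdot>\<^sub>v v))^2 = \<kappa> * (N * (v \<bullet> y)^2 - r)"
        unfolding sd_def[symmetric] a_def[symmetric] X_def[symmetric] w_def[symmetric] by auto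
    qed
  qed
  have LB: "ereal (c0n + m) \<le> (INF x\<in>S. ereal (x $ (n - 1)))"
  proof (rule INF_greatest)
    fix x assume "x \<in> S"
    then obtain y where "x = c0 + y" "y \<in> carrier_vec n" "y \<bullet> (M *\<^sub>v y) \<le> - r" "0 \<le> v \<bullet> y"
      using Sdest by blast
    then show "ereal (c0n + m) \<le> ereal (x $ (n - 1))" using KA Sval by simp
  qed
  show ?thesis
  proof (cases "p^2 - N * \<kappa> = 0")
    case False
    then have Dp: "0 < p^2 - N * \<kappa>" using Dle by simp
    have sdp: "0 < sd" unfolding sd_def using Dp by simp
    define Xs where "Xs = p * a / sd"
    define Ys where "Ys = - (a * N * \<kappa> / sd)"
    define ws where "ws = (if \<kappa> = 0 then 0\<^sub>v n else (Ys / \<kappa>) \<cdot>\<^sub>v w0)"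
    have wsc: "ws \<in> carrier_vec n" unfolding ws_def using w0c by simp
    have vws: "v \<bullet> ws = 0" unfolding ws_def using vw0 w0c vc by simp
    have Qws: "ws \<bullet> (M *\<^sub>v ws) = a^2 * N^2 * \<kappa> / sd^2"
    proof (cases "\<kappa> = 0")
      case True then show ?thesis unfolding ws_def using M by simp
    next
      case False
      then have "ws \<bullet> (M *\<^sub>v ws) = (Ys / \<kappa>)^2 * \<kappa>" unfolding ws_def kq using M w0c
        by (simp add: mult_mat_vec power2_eq_square)
      also have "\<dots> = a^2 * N^2 * \<kappa> / sd^2" unfolding Ys_def using False sdp
        by (simp add: field_simps power2_eq_square)
      finally show ?thesis .
    qed
    have hws: "h \<bullet> ws = Ys"
    proof (cases "\<kappa> = 0")
      case True then show ?thesis unfolding ws_def Ys_def using hc by simp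
    next
      case False then show ?thesis unfolding ws_def \<kappa>_def using hc w0c by simp
    qed
    define ys where "ys = Xs \<cdot>\<^sub>v v + ws"
    have ysc: "ys \<in> carrier_vec n" unfolding ys_def using vc wsc by simp
    have qys: "ys \<bullet> (M *\<^sub>v ys) = - r"
    proof -
      have "ys \<bullet> (M *\<^sub>v ys) = - N * Xs^2 + a^2 * N^2 * \<kappa> / sd^2"
        unfolding ys_def decQ[OF wsc vws] Qws ..
      also have "\<dots> = - N * a^2 * (p^2 - N * \<kappa>) / sd^2" unfolding Xs_def using sdp
        by (simp add: field_simps power2_eq_square)
      also have "\<dots> = - r" unfolding sd2[symmetric] using sdp Na by simp
      finally show ?thesis .
    qed
    have vys: "0 \<le> v \<bullet> ys" unfolding ys_def decV[OF wsc vws] Xs_def using ppos a0 sdp by simp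
    have eys: "e \<bullet> ys = m"
    proof -
      have "e \<bullet> ys = Xs * p + Ys" unfolding ys_def decE[OF wsc vws] hws ..
      also have "\<dots> = a * (p^2 - N * \<kappa>) / sd" unfolding Xs_def Ys_def using sdp
        by (simp add: field_simps power2_eq_square)
      also have "\<dots> = m" unfolding sd2[symmetric] m_def using sdp by (simp add: power2_eq_square)
      finally show ?thesis .
    qed
    define xs where "xs = c0 + ys"
    have xsS: "xs \<in> S" unfolding xs_def using Smem[OF ysc] qys vys by simp
    have xsv: "xs $ (n - 1) = c0n + m" unfolding xs_def Sval[OF ysc] eys ..
    have INFeq: "(INF x\<in>S. ereal (x $ (n - 1))) = ereal (c0n + m)"
    proof (rule antisym[OF _ LB])
      show "(INF x\<in>S. ereal (x $ (n - 1))) \<le> ereal (c0n + m)"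
        using INF_lower[OF xsS, of "\<lambda>x. ereal (x $ (n - 1))"] xsv by simp
    qed
    have uniq: "y = ys" if y: "y \<in> carrier_vec n" and qy: "y \<bullet> (M *\<^sub>v y) \<le> - r"
      and vy: "0 \<le> v \<bullet> y" and ey: "e \<bullet> y = m" for y
    proof -
      define X where "X = v \<bullet> y"
      define w where "w = y - X \<cdot>\<^sub>v v"
      have ye: "y = X \<cdot>\<^sub>v v + w" and wc: "w \<in> carrier_vec n" and vw: "v \<bullet> w = 0"
        using split[OF y] unfolding X_def w_def by auto
      from KA[OF y qy vy] ey have sX: "sd * X = p * a"
        and Y2: "(h \<bullet> w)^2 = \<kappa> * (N * X^2 - r)" unfolding X_def w_def by auto
      have XX: "X = Xs" unfolding Xs_def using sX sdp by (simp add: field_simps)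
      have Qy: "y \<bullet> (M *\<^sub>v y) = - N * X^2 + w \<bullet> (M *\<^sub>v w)" unfolding ye by (rule decQ[OF wc vw])
      have Ey: "e \<bullet> y = X * p + h \<bullet> w" unfolding ye by (rule decE[OF wc vw])
      have hw: "h \<bullet> w = Ys"
      proof -
        have "h \<bullet> w = m - Xs * p" using Ey ey XX by simp
        also have "\<dots> = Ys" using eys decE[OF wsc vws] hws unfolding ys_def by simp
        finally show ?thesis .
      qed
      have Qwle: "w \<bullet> (M *\<^sub>v w) \<le> N * X^2 - r" using Qy qy by simp
      have Qw0: "0 \<le> w \<bullet> (M *\<^sub>v w)" by (rule F1'[OF wc vw])
      have "w = ws"
      proof (cases "\<kappa> = 0")
        case True
        have "N * X^2 - r = 0" unfolding XX Xs_def using True sd2 sdp Na ppos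
          by (simp add: field_simps power2_eq_square)
        then have "w \<bullet> (M *\<^sub>v w) = 0" using Qwle Qw0 by simp
        then show ?thesis using DEF[OF wc vw] True unfolding ws_def by simp
      next
        case False
        then have kp: "0 < \<kappa>" using k0 by simp
        have "\<kappa> * (N * X^2 - r) \<le> \<kappa> * (w \<bullet> (M *\<^sub>v w))" using Y2 CS[OF wc vw] by simp
        then have "N * X^2 - r \<le> w \<bullet> (M *\<^sub>v w)" using kp by simp
        then have Qweq: "w \<bullet> (M *\<^sub>v w) = N * X^2 - r" using Qwle by simp
        define z where "z = \<kappa> \<cdot>\<^sub>v w + (- Ys) \<cdot>\<^sub>v w0"
        have zc: "z \<in> carrier_vec n" unfolding z_def using wc w0c by simp
        have vz: "v \<bullet> z = 0" unfolding z_def using vc wc w0c vw vw0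
          by (simp add: scalar_prod_add_distrib[of _ n])
        have Bww0: "w \<bullet> (M *\<^sub>v w0) = Ys" using Mw0 hw comm_scalar_prod[OF wc hc] by simp
        have "z \<bullet> (M *\<^sub>v z) = \<kappa>^2 * (w \<bullet> (M *\<^sub>v w)) + 2 * \<kappa> * (- Ys) * Ys + (- Ys)^2 * \<kappa>"
          unfolding z_def expand2[OF M sym wc w0c] Bww0 kq[symmetric] ..
        also have "\<dots> = \<kappa> * (\<kappa> * (N * X^2 - r) - Ys^2)" unfolding Qweq
          by (simp add: power2_eq_square algebra_simps)
        also have "\<dots> = 0" using Y2 hw by simp
        finally have "z = 0\<^sub>v n" by (rule DEF[OF zc vz])
        then show ?thesis
        proof -
          assume z0: "z = 0\<^sub>v n"
          show "w = ws"
          proof (rule eq_vecI)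
            fix i assume "i < dim_vec ws"
            then have i: "i < n" using wsc by simp
            have "z $ i = 0" using z0 i by simp
            then have "\<kappa> * w $ i - Ys * w0 $ i = 0" unfolding z_def using i wc w0c by simp
            then show "w $ i = ws $ i" unfolding ws_def using False i w0c kp by (simp add: field_simps)
          qed (use wc wsc in simp)
        qed
      qed
      then show ?thesis unfolding ye ys_def XX by simp
    qed
    have "\<exists>!x. x \<in> S \<and> ereal (x $ (n - 1)) = (INF x\<in>S. ereal (x $ (n - 1)))"
    proof (rule ex1I[of _ xs])
      show "xs \<in> S \<and> ereal (xs $ (n - 1)) = (INF x\<in>S. ereal (x $ (n - 1)))" using xsS xsv INFeq by simp
      fix x assume x: "x \<in> S \<and> ereal (x $ (n - 1)) = (INF x\<in>S. ereal (x $ (n - 1)))"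
      then obtain y where y: "x = c0 + y" "y \<in> carrier_vec n" "y \<bullet> (M *\<^sub>v y) \<le> - r" "0 \<le> v \<bullet> y"
        using Sdest by blast
      have "x $ (n - 1) = c0n + m" using x INFeq by simp
      then have "e \<bullet> y = m" using Sval[OF y(2)] y(1) by simp
      then have "y = ys" using uniq y by blast
      then show "x = xs" unfolding xs_def using y by simp
    qed
    then show ?thesis using not_unique by simp
  next
    case True
    then have sdz: "sd = 0" unfolding sd_def by simp
    have m0: "m = 0" unfolding m_def sdz by simp
    have kp: "0 < \<kappa>" using True ppos N0 by (smt (verit) mult_le_0_iff zero_less_power2)
    define \<alpha> where "\<alpha> = sqrt (\<kappa> / N)"
    have \<alpha>0: "0 < \<alpha>" unfolding \<alpha>_def using kp N0 by simp
    have N\<alpha>2: "N * \<alpha>^2 = \<kappa>" unfolding \<alpha>_def using kp N0 by simp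
    have N\<alpha>: "N * \<alpha> = p"
    proof -
      have "(N * \<alpha>)^2 = N * (N * \<alpha>^2)" by (simp add: power2_eq_square)
      also have "\<dots> = p^2" using N\<alpha>2 True by simp
      finally have "(N * \<alpha>)^2 = p^2" .
      then have "N * \<alpha> = p \<or> N * \<alpha> = - p" by (simp add: power2_eq_iff)
      moreover have "0 < N * \<alpha>" by (rule mult_pos_pos[OF N0 \<alpha>0])
      ultimately show ?thesis using ppos by linarith
    qed
    have \<alpha>p: "\<alpha> * p = \<kappa>"
    proof -
      have "\<alpha> * p = \<alpha> * (N * \<alpha>)" using N\<alpha> by simp
      also have "\<dots> = N * \<alpha>^2" by (simp add: power2_eq_square)
      finally show ?thesis using N\<alpha>2 by simp
    qed
    define d where "d = \<alpha> \<cdot>\<^sub>v v + (-1) \<cdot>\<^sub>v w0"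
    have dc: "d \<in> carrier_vec n" unfolding d_def using vc w0c by simp
    have Md: "M *\<^sub>v d = - e"
    proof -
      have "M *\<^sub>v d = \<alpha> \<cdot>\<^sub>v (M *\<^sub>v v) + (-1) \<cdot>\<^sub>v (M *\<^sub>v w0)" unfolding d_def using M vc w0c
        by (simp add: mult_add_distrib_mat_vec mult_mat_vec)
      also have "\<dots> = - e"
      proof (rule eq_vecI)
        fix i assume "i < dim_vec (- e)"
        then have i: "i < n" using ec by simp
        have pe: "p = - \<alpha> * lam" using N\<alpha> unfolding N_def by (simp add: mult.commute)
        have "(\<alpha> \<cdot>\<^sub>v (M *\<^sub>v v) + (-1) \<cdot>\<^sub>v (M *\<^sub>v w0)) $ i = \<alpha> * lam * v $ i - h $ i"
          using i M vc w0c Mv Mw0 hc by simp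
        also have "\<dots> = \<alpha> * lam * v $ i - (e $ i - p * v $ i)"
          unfolding h_def using i ec vc by simp
        also have "\<dots> = - e $ i" unfolding pe by (simp add: algebra_simps)
        finally show "(\<alpha> \<cdot>\<^sub>v (M *\<^sub>v v) + (-1) \<cdot>\<^sub>v (M *\<^sub>v w0)) $ i = (- e) $ i" using i ec by simp
      qed (use M ec in simp)
      finally show ?thesis .
    qed
    have yMd: "y \<bullet> (M *\<^sub>v d) = - (e \<bullet> y)" if y: "y \<in> carrier_vec n" for y
      unfolding Md using y ec comm_scalar_prod[OF y ec] by simp
    have ew0: "e \<bullet> w0 = \<kappa>"
    proof -
      have "h \<bullet> w0 = e \<bullet> w0 - (p \<cdot>\<^sub>v v) \<bullet> w0" unfolding h_def
        by (rule minus_scalar_prod_distrib[OF ec _ w0c], use vc in simp)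
      then show ?thesis unfolding \<kappa>_def using vw0 vc w0c by simp
    qed
    have ed: "e \<bullet> d = 0" unfolding d_def using ec vc w0c ew0 \<alpha>p
      by (simp add: scalar_prod_add_distrib[of _ n] p_def)
    have Qd: "d \<bullet> (M *\<^sub>v d) = 0" using yMd[OF dc] ed by simp
    have vd: "v \<bullet> d = \<alpha>" unfolding d_def using vc w0c vv vw0 by (simp add: scalar_prod_add_distrib[of _ n])
    define \<eta> where "\<eta> = of_int (\<lfloor>c0n\<rfloor> + 1) - c0n"
    have \<eta>0: "0 < \<eta>" unfolding \<eta>_def by linarith
    have \<eta>1: "\<eta> \<le> 1" unfolding \<eta>_def by linarith
    define Sv where "Sv = (\<Sum>i<n. \<bar>v $ i\<bar>)"
    have Sv0: "0 \<le> Sv" unfolding Sv_def by (simp add: sum_nonneg)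
    define Cq where "Cq = SA n M * real n"
    define t where "t = (Cq + r) / (2 * \<eta>) + Sv / \<alpha>"
    have Cq0: "0 \<le> Cq" unfolding Cq_def using SA_nonneg[of n M] by simp
    have Sa0: "0 \<le> Sv / \<alpha>" using Sv0 \<alpha>0 by simp
    have Cr0: "0 \<le> (Cq + r) / (2 * \<eta>)" using Cq0 r0 \<eta>0 by simp
    have ta: "Cq + r \<le> 2 * \<eta> * t"
    proof -
      have c1: "2 * \<eta> * ((Cq + r) / (2 * \<eta>)) = Cq + r" using \<eta>0 by simp
      have e1: "2 * \<eta> * t = (Cq + r) + 2 * \<eta> * (Sv / \<alpha>)"
        unfolding t_def distrib_left[of "2 * \<eta>" "(Cq + r) / (2 * \<eta>)"] c1 ..
      have "0 \<le> 2 * \<eta>" using \<eta>0 by simp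
      then have "0 \<le> 2 * \<eta> * (Sv / \<alpha>)" using Sa0 by (rule mult_nonneg_nonneg)
      then show ?thesis using e1 by simp
    qed
    have tb: "Sv \<le> t * \<alpha>"
    proof -
      have e1: "t * \<alpha> = (Cq + r) / (2 * \<eta>) * \<alpha> + Sv" unfolding t_def distrib_right using \<alpha>0 by simp
      have "0 \<le> (Cq + r) / (2 * \<eta>) * \<alpha>" using Cr0 \<alpha>0 by (intro mult_nonneg_nonneg) auto
      then show ?thesis using e1 by simp
    qed
    define g where "g = c0 + t \<cdot>\<^sub>v d"
    have gc: "g \<in> carrier_vec n" unfolding g_def using c0 dc by simp
    have gn: "g $ (n - 1) = c0n" unfolding g_def c0n_def using c0 dc n1 ed edot[OF dc] by simp
    define x where "x = (vec n (\<lambda>i. if i = n - 1 then of_int (\<lfloor>c0n\<rfloor> + 1) else of_int \<lceil>g $ i\<rceil>) :: real vec)"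
    have xc: "x \<in> carrier_vec n" unfolding x_def by simp
    define \<rho> where "\<rho> = x - g"
    have \<rho>c: "\<rho> \<in> carrier_vec n" unfolding \<rho>_def using xc gc by simp
    have \<rho>i: "0 \<le> \<rho> $ i \<and> \<rho> $ i \<le> 1" if i: "i < n" for i
    proof (cases "i = n - 1")
      case True
      then show ?thesis unfolding \<rho>_def x_def using i gc gn \<eta>0 \<eta>1 unfolding \<eta>_def by simp
    next
      case False
      then show ?thesis unfolding \<rho>_def x_def using i gc by (simp; linarith)
    qed
    have \<rho>n: "e \<bullet> \<rho> = \<eta>" using edot[OF \<rho>c] n1 gn unfolding \<rho>_def x_def \<eta>_def using gc by simp
    have \<rho>\<rho>: "\<rho> \<bullet> \<rho> \<le> real n"
    proof -
      have "\<rho> \<bullet> \<rho> = (\<Sum>i<n. (\<rho> $ i)^2)" by (rule sq_sum[OF \<rho>c])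
      also have "\<dots> \<le> (\<Sum>i<n. 1)"
      proof (rule sum_mono)
        fix i assume "i \<in> {..<n}"
        then have "0 \<le> \<rho> $ i" "\<rho> $ i \<le> 1" using \<rho>i by auto
        then show "(\<rho> $ i)^2 \<le> 1" by (simp add: power_le_one)
      qed
      finally show ?thesis by simp
    qed
    have Q\<rho>: "\<rho> \<bullet> (M *\<^sub>v \<rho>) \<le> Cq"
    proof -
      have "\<rho> \<bullet> (M *\<^sub>v \<rho>) \<le> SA n M * (\<rho> \<bullet> \<rho>)" using quad_bound[OF M \<rho>c] by simp
      also have "\<dots> \<le> SA n M * real n" using \<rho>\<rho> SA_nonneg[of n M] by (simp add: mult_left_mono)
      finally show ?thesis unfolding Cq_def .
    qed
    have v\<rho>: "- Sv \<le> v \<bullet> \<rho>"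
    proof -
      have "\<bar>v \<bullet> \<rho>\<bar> = \<bar>\<Sum>i<n. v $ i * \<rho> $ i\<bar>" using \<rho>c by (simp add: scalar_prod_def atLeast0LessThan)
      also have "\<dots> \<le> (\<Sum>i<n. \<bar>v $ i * \<rho> $ i\<bar>)" by (rule sum_abs)
      also have "\<dots> \<le> Sv" unfolding Sv_def
      proof (rule sum_mono)
        fix i assume "i \<in> {..<n}"
        then have "0 \<le> \<rho> $ i" "\<rho> $ i \<le> 1" using \<rho>i by auto
        then show "\<bar>v $ i * \<rho> $ i\<bar> \<le> \<bar>v $ i\<bar>" by (simp add: abs_mult mult_left_le)
      qed
      finally show ?thesis by simp
    qed
    define z where "z = x - c0"
    have zc: "z \<in> carrier_vec n" unfolding z_def using xc c0 by simp
    have ze: "z = 1 \<cdot>\<^sub>v \<rho> + t \<cdot>\<^sub>v d"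
      unfolding z_def \<rho>_def g_def by (rule eq_vecI, insert xc c0 dc, auto)
    have Qz: "z \<bullet> (M *\<^sub>v z) = \<rho> \<bullet> (M *\<^sub>v \<rho>) - 2 * t * \<eta>"
      unfolding ze expand2[OF M sym \<rho>c dc] yMd[OF \<rho>c] \<rho>n Qd by simp
    have qz: "z \<bullet> (M *\<^sub>v z) \<le> - r" using Qz Q\<rho> ta by (simp add: algebra_simps)
    have vz: "0 \<le> v \<bullet> z"
    proof -
      have "v \<bullet> z = v \<bullet> \<rho> + t * \<alpha>" unfolding ze using vc \<rho>c dc vd
        by (simp add: scalar_prod_add_distrib[of _ n])
      then show ?thesis using v\<rho> tb by simp
    qed
    have xz: "x = c0 + z" unfolding z_def by (rule eq_vecI, insert xc c0, auto)
    have xS: "x \<in> S" unfolding xz by (rule Smem[OF zc qz vz])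
    have xI: "x \<in> int_vecs n" unfolding int_vecs_def x_def by auto
    have xn: "x $ (n - 1) \<le> c0n + 1" unfolding x_def using n1 by simp
    define I1 where "I1 = (INF x\<in>S \<inter> int_vecs n. ereal (x $ (n - 1)))"
    define I0 where "I0 = (INF x\<in>S. ereal (x $ (n - 1)))"
    have I1le: "I1 \<le> ereal (c0n + 1)" unfolding I1_def
      using INF_lower[of x "S \<inter> int_vecs n" "\<lambda>x. ereal (x $ (n - 1))"] xS xI xn by (meson IntI order_trans ereal_less_eq(3))
    have I0ge: "ereal c0n \<le> I0" unfolding I0_def using LB m0 by simp
    have I01: "I0 \<le> I1" unfolding I0_def I1_def by (rule INF_superset_mono) auto
    obtain a0' where a0': "I0 = ereal a0'" using I0ge I01 I1le by (cases I0) auto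
    obtain b0' where b0': "I1 = ereal b0'" using I0ge I01 I1le by (cases I1) auto
    have "b0' - a0' \<le> 1" using a0' b0' I0ge I1le by simp
    then show ?thesis using a0' b0' unfolding I0_def[symmetric] I1_def[symmetric] by simp
  qed
qed

end
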